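(* Let $\mathscr{C}$ be any class of abstract monoids (closed under isomorphism), $\mathscr{A}$ an alphabet with $|\mathscr{A}| \geq 2$, and $k$ a positive integer. Let $p_n$ be the proportion of ordered monoid presentations over $\mathscr{A}$ with $k$ relations and sum relation length $n$ (respectively, maximum relation length $n$) which present monoids in $\mathscr{C}$, and let $q_n$ be the corresponding proportion of (unordered) monoid presentations over $\mathscr{A}$ with $k$ relations and sum (respectively, maximum) relation length $n$. Then $p_n - q_n \to 0$ as $n \to \infty$.
   Context: A monoid presentation $\langle \mathscr{A} \mid \mathscr{R} \rangle$ consists of an alphabet $\mathscr{A}$ and a set $\mathscr{R}$ of $k$ pairs of words over $\mathscr{A}$ (its relations); an ordered monoid presentation is the same except that $\mathscr{R}$ is a sequence of $k$ pairs of words. The monoid presented is $\mathscr{A}^*$ modulo the smallest congruence containing the relations. The sum relation length is the total length of all words forming sides of relations; the maximum relation length is the length of the longest such word. *)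

theory Defs
  imports Complex_Main "HOL-Algebra.Group"
begin

inductive_set pres_cong :: "'a set \<Rightarrow> ('a list \<times> 'a list) set \<Rightarrow> ('a list \<times> 'a list) set"
  for A :: "'a set" and R :: "('a list \<times> 'a list) set" where
  rel:   "(u, v) \<in> R \<Longrightarrow> (u, v) \<in> pres_cong A R"
| refl:  "w \<in> lists A \<Longrightarrow> (w, w) \<in> pres_cong A R"
| sym:   "(u, v) \<in> pres_cong A R \<Longrightarrow> (v, u) \<in> pres_cong A R"
| trans: "(u, v) \<in> pres_cong A R \<Longrightarrow> (v, w) \<in> pres_cong A R \<Longrightarrow> (u, w) \<in> pres_cong A R"
| ctxt:  "(u, v) \<in> pres_cong A R \<Longrightarrow> x \<in> lists A \<Longrightarrow> y \<in> lists A
          \<Longrightarrow> (x @ u @ y, x @ v @ y) \<in> pres_cong A R"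

definition presented_monoid :: "'a set \<Rightarrow> ('a list \<times> 'a list) set \<Rightarrow> ('a list set) monoid" where
  "presented_monoid A R =
     \<lparr> carrier = lists A // pres_cong A R,
       mult = (\<lambda>X Y. \<Union>u\<in>X. \<Union>v\<in>Y. pres_cong A R `` {u @ v}),
       one = pres_cong A R `` {[]} \<rparr>"

definition iso_closed_class :: "('b monoid \<Rightarrow> bool) \<Rightarrow> bool" where
  "iso_closed_class C \<longleftrightarrow>
     (\<forall>M N. monoid M \<and> monoid N \<and> M \<cong> N \<and> C M \<longrightarrow> C N)"

definition ord_presentations :: "'a set \<Rightarrow> nat \<Rightarrow> ('a list \<times> 'a list) list set" where
  "ord_presentations A k = {rs. length rs = k \<and> set rs \<subseteq> lists A \<times> lists A}"

definition presentations :: "'a set \<Rightarrow> nat \<Rightarrow> ('a list \<times> 'a list) set set" where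
  "presentations A k = {R. finite R \<and> card R = k \<and> R \<subseteq> lists A \<times> lists A}"

definition ord_sum_len :: "('a list \<times> 'a list) list \<Rightarrow> nat" where
  "ord_sum_len rs = (\<Sum>(u, v) \<leftarrow> rs. length u + length v)"

definition ord_max_len :: "('a list \<times> 'a list) list \<Rightarrow> nat" where
  "ord_max_len rs = Max (set (map (\<lambda>(u, v). max (length u) (length v)) rs))"

definition sum_len :: "('a list \<times> 'a list) set \<Rightarrow> nat" where
  "sum_len R = (\<Sum>(u, v) \<in> R. length u + length v)"

definition max_len :: "('a list \<times> 'a list) set \<Rightarrow> nat" where
  "max_len R = Max ((\<lambda>(u, v). max (length u) (length v)) ` R)"

definition ord_proportion ::
  "('a list set monoid \<Rightarrow> bool) \<Rightarrow> 'a set \<Rightarrow> nat \<Rightarrow> (('a list \<times> 'a list) list \<Rightarrow> nat) \<Rightarrow> nat \<Rightarrow> real" where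
  "ord_proportion C A k len n =
     real (card {rs \<in> ord_presentations A k. len rs = n \<and> C (presented_monoid A (set rs))})
     / real (card {rs \<in> ord_presentations A k. len rs = n})"

definition proportion ::
  "('a list set monoid \<Rightarrow> bool) \<Rightarrow> 'a set \<Rightarrow> nat \<Rightarrow> (('a list \<times> 'a list) set \<Rightarrow> nat) \<Rightarrow> nat \<Rightarrow> real" where
  "proportion C A k len n =
     real (card {R \<in> presentations A k. len R = n \<and> C (presented_monoid A R)})
     / real (card {R \<in> presentations A k. len R = n})"

end

theory Submission
  imports Defs "HOL-Combinatorics.Multiset_Permutations"
begin

lemma real_bound:
  fixes t d b s g tc f :: nat
  assumes "t = d + b" "d = f * s" "f > 0" "f * g \<le> tc" "tc \<le> f * g + b" "g \<le> s"
  shows "\<bar>real tc / real t - real g / real s\<bar> \<le> 2 * real b / real t"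
proof (cases "s = 0")
  case True
  then have "g = 0" "d = 0" using assms by auto
  then show ?thesis using assms True
    by (auto simp: divide_simps)
next
  case False
  then have sp: "s > 0" by simp
  have dp: "d > 0" using assms sp by simp
  have tp: "t > 0" using assms dp by simp
  have q: "real g / real s = real (f*g) / real d" using assms sp by (simp add: field_simps)
  have dt: "real d \<le> real t" using assms by simp
  have fgd: "real (f*g) \<le> real d" using assms by simp
  have up: "real tc / real t - real (f*g) / real d \<le> real b / real t"
  proof -
    have "real tc \<le> real (f*g) + real b" using assms(5) of_nat_mono by fastforce
    then have "real tc / real t \<le> (real (f*g) + real b) / real t"
      using tp by (intro divide_right_mono) auto
    also have "\<dots> = real (f*g) / real t + real b / real t" by (simp add: add_divide_distrib)
    also have "real (f*g) / real t \<le> real (f*g) / real d"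
      using dp dt by (intro divide_left_mono) auto
    finally show ?thesis by simp
  qed
  have lo: "real (f*g) / real d - real tc / real t \<le> real b / real t"
  proof -
    have "real (f*g) \<le> real tc" using assms(4) of_nat_mono by blast
    then have "real (f*g) / real t \<le> real tc / real t"
      using tp by (intro divide_right_mono) auto
    moreover have "real (f*g) / real d - real (f*g) / real t = real (f*g) * real b / (real d * real t)"
    proof -
      have tdr: "real t = real d + real b" using assms(1) by simp
      show ?thesis using dp tp unfolding tdr by (simp add: field_simps)
    qed
    moreover have "real (f*g) * real b / (real d * real t) \<le> real d * real b / (real d * real t)"
      using fgd dp tp by (intro divide_right_mono mult_right_mono) auto
    moreover have "real d * real b / (real d * real t) = real b / real t" using dp by simp
    ultimately show ?thesis by linarith
  qed
  have "0 \<le> real b / real t" by simp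
  show ?thesis using up lo q by (simp add: abs_le_iff)
qed

lemma prop_diff_bound:
  fixes lO :: "('a list \<times> 'a list) list \<Rightarrow> nat" and lS :: "('a list \<times> 'a list) set \<Rightarrow> nat"
  assumes fin: "finite {rs \<in> ord_presentations A k. lO rs = n}"
    and eq: "\<And>rs. rs \<in> ord_presentations A k \<Longrightarrow> distinct rs \<Longrightarrow> lS (set rs) = lO rs"
  shows "\<bar>ord_proportion C A k lO n - proportion C A k lS n\<bar> \<le>
    2 * real (card {rs \<in> ord_presentations A k. lO rs = n \<and> \<not> distinct rs})
      / real (card {rs \<in> ord_presentations A k. lO rs = n})"
proof -
  define T where "T = {rs \<in> ord_presentations A k. lO rs = n}"
  define Bd where "Bd = {rs \<in> ord_presentations A k. lO rs = n \<and> \<not> distinct rs}"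
  define D where "D = {rs \<in> T. distinct rs}"
  define S where "S = {R \<in> presentations A k. lS R = n}"
  define SC where "SC = {R \<in> presentations A k. lS R = n \<and> C (presented_monoid A R)}"
  define TC where "TC = {rs \<in> ord_presentations A k. lO rs = n \<and> C (presented_monoid A (set rs))}"
  define DC where "DC = {rs \<in> TC. distinct rs}"
  have finT: "finite T" using fin T_def by simp
  have key: "{rs \<in> T. distinct rs \<and> Q (set rs)} = (\<Union>R\<in>{R \<in> S. Q R}. permutations_of_set R)" for Q
  proof (intro equalityI subsetI)
    fix rs assume "rs \<in> {rs \<in> T. distinct rs \<and> Q (set rs)}"
    then have rs: "rs \<in> ord_presentations A k" "lO rs = n" "distinct rs" "Q (set rs)"
      by (auto simp: T_def)
    have "set rs \<in> {R \<in> S. Q R}"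
      using rs eq[of rs] distinct_card[of rs]
      by (auto simp: S_def presentations_def ord_presentations_def)
    then show "rs \<in> (\<Union>R\<in>{R \<in> S. Q R}. permutations_of_set R)"
      using rs by (auto simp: permutations_of_set_def)
  next
    fix rs assume "rs \<in> (\<Union>R\<in>{R \<in> S. Q R}. permutations_of_set R)"
    then obtain R where R: "R \<in> S" "Q R" "set rs = R" "distinct rs"
      by (auto simp: permutations_of_set_def)
    have len: "length rs = k" using R distinct_card[of rs] by (auto simp: S_def presentations_def)
    have op: "rs \<in> ord_presentations A k" using R len by (auto simp: S_def presentations_def ord_presentations_def)
    show "rs \<in> {rs \<in> T. distinct rs \<and> Q (set rs)}"
      using op R eq[OF op] by (auto simp: T_def S_def)
  qed
  have finS: "finite S"
  proof (rule finite_subset[OF _ finite_imageI[OF finT, of set]])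
    show "S \<subseteq> set ` T"
    proof
      fix R assume "R \<in> S"
      then have R: "finite R" "card R = k" "R \<subseteq> lists A \<times> lists A" "lS R = n"
        by (auto simp: S_def presentations_def)
      obtain xs where xs: "set xs = R" "distinct xs" using finite_distinct_list[OF R(1)] by blast
      have "xs \<in> T" using xs R eq[of xs] distinct_card[of xs]
        by (auto simp: T_def ord_presentations_def)
      then show "R \<in> set ` T" using xs by auto
    qed
  qed
  have cardQ: "card {rs \<in> T. distinct rs \<and> Q (set rs)} = fact k * card {R \<in> S. Q R}" for Q
  proof -
    have "card (\<Union>R\<in>{R \<in> S. Q R}. permutations_of_set R) = (\<Sum>R\<in>{R \<in> S. Q R}. card (permutations_of_set R))"
      using finS by (intro card_UN_disjoint) (auto dest: permutations_of_setD)
    also have "\<dots> = (\<Sum>R\<in>{R \<in> S. Q R}. fact k)"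
      by (intro sum.cong) (auto simp: S_def presentations_def)
    finally show ?thesis using key[of Q] by simp
  qed
  have cD: "card D = fact k * card S" using cardQ[of "\<lambda>_. True"] by (simp add: D_def)
  have cDC: "card DC = fact k * card SC"
    using cardQ[of "\<lambda>R. C (presented_monoid A R)"]
    by (simp add: DC_def TC_def T_def SC_def S_def conj_commute conj_left_commute)
  have TDB: "T = D \<union> Bd" "D \<inter> Bd = {}" by (auto simp: T_def D_def Bd_def)
  have cT: "card T = card D + card Bd"
    using TDB finT by (metis card_Un_disjoint finite_Un)
  have TCsub: "TC \<subseteq> DC \<union> Bd" "DC \<subseteq> TC" by (auto simp: TC_def DC_def Bd_def)
  have finB: "finite Bd" using finT TDB by auto
  have finTC: "finite TC" using finT by (rule finite_subset[rotated]) (auto simp: TC_def T_def)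
  have c1: "card DC \<le> card TC" using TCsub finTC card_mono by blast
  have c2: "card TC \<le> card DC + card Bd"
    using TCsub finTC finB card_mono[of "DC \<union> Bd" TC] card_Un_le[of DC Bd]
    by (meson card_mono finite_Un finite_subset le_trans TCsub(2))
  have gs: "card SC \<le> card S" using finS by (intro card_mono) (auto simp: SC_def S_def)
  have "\<bar>real (card TC) / real (card T) - real (card SC) / real (card S)\<bar> \<le> 2 * real (card Bd) / real (card T)"
    by (rule real_bound[OF cT cD _ _ _ gs]) (use cDC c1 c2 in auto)
  then show ?thesis
    by (simp add: ord_proportion_def proportion_def T_def Bd_def TC_def S_def SC_def)
qed


definition del :: "nat \<Rightarrow> 'b list \<Rightarrow> 'b list" where
  "del j xs = take j xs @ drop (Suc j) xs"

lemma del_inj: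
  assumes "i < j" "j < length x" "length y = length x" "x ! i = x ! j" "y ! i = y ! j"
    "del j x = del j y"
  shows "x = y"
proof -
  have tj: "take j x = take j y" "drop (Suc j) x = drop (Suc j) y"
    using assms(6) assms(2,3) unfolding del_def
    by (simp_all add: append_eq_append_conv)
  have "x ! i = y ! i" using tj(1) assms(1) by (metis nth_take)
  then have "x ! j = y ! j" using assms by simp
  then show ?thesis using tj assms(2,3) by (metis id_take_nth_drop)
qed

lemma bad_bound:
  assumes finY: "finite Y" and finB: "finite B"
    and len: "\<And>rs. rs \<in> B \<Longrightarrow> length rs = k"
    and img: "\<And>rs i j. rs \<in> B \<Longrightarrow> i < j \<Longrightarrow> j < k \<Longrightarrow> rs ! i = rs ! j \<Longrightarrow> del j rs \<in> Y"
  shows "card {rs \<in> B. \<not> distinct rs} \<le> k * k * card Y"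
proof -
  define Prs where "Prs = {(i, j). i < j \<and> j < k}"
  define Bij where "Bij = (\<lambda>(i::nat, j::nat). {rs \<in> B. rs ! i = rs ! j})"
  have sub: "{rs \<in> B. \<not> distinct rs} \<subseteq> (\<Union>p\<in>Prs. Bij p)"
  proof
    fix rs assume rs: "rs \<in> {rs \<in> B. \<not> distinct rs}"
    then have l: "length rs = k" using len by auto
    from rs obtain i j where ij: "i < k" "j < k" "i \<noteq> j" "rs ! i = rs ! j"
      using l by (auto simp: distinct_conv_nth)
    show "rs \<in> (\<Union>p\<in>Prs. Bij p)"
    proof (cases "i < j")
      case True
      then have "(i, j) \<in> Prs" "rs \<in> Bij (i, j)" using ij rs by (auto simp: Prs_def Bij_def)
      then show ?thesis by blast
    next
      case False then have "j < i" using ij by simp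
      then have "(j, i) \<in> Prs" "rs \<in> Bij (j, i)" using ij rs by (auto simp: Prs_def Bij_def)
      then show ?thesis by blast
    qed
  qed
  have finPrs: "finite Prs"
    by (rule finite_subset[of _ "{..<k} \<times> {..<k}"]) (auto simp: Prs_def)
  have cPrs: "card Prs \<le> k * k"
  proof -
    have "Prs \<subseteq> {..<k} \<times> {..<k}" by (auto simp: Prs_def)
    then have "card Prs \<le> card ({..<k} \<times> {..<k})" by (intro card_mono) auto
    then show ?thesis by (simp add: card_cartesian_product)
  qed
  have cB: "card (Bij p) \<le> card Y" if "p \<in> Prs" for p
  proof -
    obtain i j where p0: "p = (i, j)" by (cases p)
    then have p: "p = (i, j)" "i < j" "j < k" using that unfolding Prs_def by auto
    have "inj_on (del j) (Bij p)"
      using p len by (intro inj_onI) (auto simp: Bij_def intro: del_inj)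
    moreover have "del j ` Bij p \<subseteq> Y" using p img by (auto simp: Bij_def)
    ultimately show ?thesis using finY card_inj_on_le by blast
  qed
  have "card {rs \<in> B. \<not> distinct rs} \<le> card (\<Union>p\<in>Prs. Bij p)"
    using sub finPrs finB by (intro card_mono) (auto simp: Bij_def)
  also have "\<dots> \<le> (\<Sum>p\<in>Prs. card (Bij p))" by (rule card_UN_le[OF finPrs])
  also have "\<dots> \<le> (\<Sum>p\<in>Prs. card Y)" using cB by (rule sum_mono)
  also have "\<dots> = card Prs * card Y" by simp
  also have "\<dots> \<le> k * k * card Y" using cPrs by simp
  finally show ?thesis .
qed


lemma ident_rev: "(\<Sum>j\<le>n. (n + 1 - j) * ((r + j) choose j)) = (n + r + 2) choose n"
proof (induction n)
  case 0 then show ?case by simp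
next
  case (Suc n)
  have "(\<Sum>j\<le>Suc n. (Suc n + 1 - j) * ((r + j) choose j))
      = (\<Sum>j\<le>Suc n. (n + 1 - j) * ((r + j) choose j) + ((r + j) choose j))"
    by (intro sum.cong) (auto simp: Suc_diff_le algebra_simps)
  also have "\<dots> = (\<Sum>j\<le>Suc n. (n + 1 - j) * ((r + j) choose j)) + (\<Sum>j\<le>Suc n. (r + j) choose j)"
    by (simp add: sum.distrib)
  also have "(\<Sum>j\<le>Suc n. (n + 1 - j) * ((r + j) choose j)) = (\<Sum>j\<le>n. (n + 1 - j) * ((r + j) choose j))"
    by simp
  also have "(\<Sum>j\<le>Suc n. (r + j) choose j) = Suc (r + Suc n) choose Suc n"
    by (rule sum_choose_lower)
  finally show ?case using Suc.IH by (simp add: add_ac)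
qed

lemma ident: "(\<Sum>l\<le>n. (l + 1) * ((n - l + r) choose (n - l))) = (n + r + 2) choose n"
proof -
  have "(\<Sum>l\<le>n. (l + 1) * ((n - l + r) choose (n - l))) = (\<Sum>j\<le>n. (n + 1 - j) * ((r + j) choose j))"
    by (rule sum.reindex_bij_witness[of _ "\<lambda>j. n - j" "\<lambda>l. n - l"]) (auto simp: add.commute)
  then show ?thesis using ident_rev by simp
qed

definition PR :: "'a set \<Rightarrow> nat \<Rightarrow> ('a list \<times> 'a list) set" where
  "PR A l = {(u, v). u \<in> lists A \<and> v \<in> lists A \<and> length u + length v = l}"

definition Wd :: "'a set \<Rightarrow> nat \<Rightarrow> 'a list set" where
  "Wd A a = {xs. set xs \<subseteq> A \<and> length xs = a}"

lemma PR_eq: "PR A l = (\<Union>a\<in>{..l}. Wd A a \<times> Wd A (l - a))"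
  by (auto simp: PR_def Wd_def)

lemma finite_PR: "finite A \<Longrightarrow> finite (PR A l)"
  unfolding PR_eq Wd_def by (intro finite_UN_I finite_cartesian_product finite_lists_length_eq) auto

lemma card_PR: assumes "finite A" shows "card (PR A l) = (l + 1) * card A ^ l"
proof -
  have "card (PR A l) = (\<Sum>a\<le>l. card (Wd A a \<times> Wd A (l - a)))"
    unfolding PR_eq using assms
    by (intro card_UN_disjoint) (auto simp: Wd_def finite_lists_length_eq)
  also have "\<dots> = (\<Sum>a\<le>l. card A ^ l)"
  proof (rule sum.cong[OF HOL.refl])
    fix a assume "a \<in> {..l}"
    then show "card (Wd A a \<times> Wd A (l - a)) = card A ^ l"
      using assms by (simp add: card_cartesian_product Wd_def card_lists_length_eq power_add[symmetric])
  qed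
  finally show ?thesis by simp
qed

definition P :: "'a set \<Rightarrow> nat \<Rightarrow> nat \<Rightarrow> ('a list \<times> 'a list) list set" where
  "P A k n = {rs \<in> ord_presentations A k. ord_sum_len rs = n}"

lemma ord_sum_len_Nil [simp]: "ord_sum_len [] = 0"
  by (simp add: ord_sum_len_def)

lemma ord_sum_len_Cons [simp]: "ord_sum_len ((u, v) # rs) = length u + length v + ord_sum_len rs"
  by (simp add: ord_sum_len_def)

lemma ord_sum_len_ge: "(u, v) \<in> set rs \<Longrightarrow> length u + length v \<le> ord_sum_len rs"
proof (induction rs)
  case Nil then show ?case by simp
next
  case (Cons r rs) then show ?case by (cases r) auto
qed

definition F :: "'a set \<Rightarrow> nat \<Rightarrow> ('a list \<times> 'a list) set" where
  "F A n = {xs. set xs \<subseteq> A \<and> length xs \<le> n} \<times> {xs. set xs \<subseteq> A \<and> length xs \<le> n}"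

lemma finite_F: "finite A \<Longrightarrow> finite (F A n)"
  unfolding F_def by (intro finite_cartesian_product finite_lists_length_le)

lemma card_F: "finite A \<Longrightarrow> card (F A n) = (\<Sum>i\<le>n. card A ^ i) ^ 2"
  unfolding F_def by (simp add: card_cartesian_product card_lists_length_le power2_eq_square)

lemma finite_P: assumes "finite A" shows "finite (P A k n)"
proof (rule finite_subset)
  show "P A k n \<subseteq> {xs. set xs \<subseteq> F A n \<and> length xs = k}"
  proof
    fix rs assume rs: "rs \<in> P A k n"
    have "set rs \<subseteq> F A n"
    proof
      fix r assume r: "r \<in> set rs"
      obtain u v where uv: "r = (u, v)" by (cases r)
      have "length u + length v \<le> n" using ord_sum_len_ge[of u v rs] r uv rs by (auto simp: P_def)
      then show "r \<in> F A n" using rs r uv by (auto simp: P_def F_def ord_presentations_def)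
    qed
    then show "rs \<in> {xs. set xs \<subseteq> F A n \<and> length xs = k}" using rs by (auto simp: P_def ord_presentations_def)
  qed
  show "finite {xs. set xs \<subseteq> F A n \<and> length xs = k}"
    by (intro finite_lists_length_eq finite_F assms)
qed

lemma P_Suc: "P A (Suc k) n = (\<Union>l\<in>{..n}. (\<lambda>(r, t). r # t) ` (PR A l \<times> P A k (n - l)))"
proof (intro equalityI subsetI)
  fix rs assume rs: "rs \<in> P A (Suc k) n"
  then obtain u v t where rs': "rs = (u, v) # t"
    by (auto simp: P_def ord_presentations_def length_Suc_conv)
  show "rs \<in> (\<Union>l\<in>{..n}. (\<lambda>(r, t). r # t) ` (PR A l \<times> P A k (n - l)))"
    using rs unfolding rs'
    by (auto simp: P_def PR_def ord_presentations_def intro!: bexI[of _ "length u + length v"]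
        image_eqI[of _ _ "((u, v), t)"])
next
  fix rs assume "rs \<in> (\<Union>l\<in>{..n}. (\<lambda>(r, t). r # t) ` (PR A l \<times> P A k (n - l)))"
  then show "rs \<in> P A (Suc k) n"
    by (auto simp: P_def PR_def ord_presentations_def; blast)
qed

lemma card_P_Suc: assumes "finite A"
  shows "card (P A (Suc k) n) = (\<Sum>l\<le>n. card (PR A l) * card (P A k (n - l)))"
proof -
  have "card (P A (Suc k) n) = (\<Sum>l\<le>n. card ((\<lambda>(r, t). r # t) ` (PR A l \<times> P A k (n - l))))"
    unfolding P_Suc using assms
    by (intro card_UN_disjoint finite_atMost ballI finite_imageI finite_cartesian_product finite_PR finite_P assms)
      (auto simp: PR_def)
  also have "\<dots> = (\<Sum>l\<le>n. card (PR A l) * card (P A k (n - l)))"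
  proof (intro sum.cong HOL.refl)
    fix l
    have "inj_on (\<lambda>(r, t). r # t) (PR A l \<times> P A k (n - l))" by (auto simp: inj_on_def)
    then show "card ((\<lambda>(r, t). r # t) ` (PR A l \<times> P A k (n - l))) = card (PR A l) * card (P A k (n - l))"
      by (simp add: card_image card_cartesian_product)
  qed
  finally show ?thesis .
qed

lemma P_0: "P A 0 n = (if n = 0 then {[]} else {})"
  by (auto simp: P_def ord_presentations_def)

lemma card_P: assumes "finite A"
  shows "card (P A (Suc k) n) = card A ^ n * ((n + 2 * k + 1) choose n)"
proof (induction k arbitrary: n)
  case 0
  have "card (P A (Suc 0) n) = (\<Sum>l\<le>n. card (PR A l) * card (P A 0 (n - l)))"
    by (rule card_P_Suc[OF assms])
  also have "\<dots> = (\<Sum>l\<le>n. if l = n then card (PR A l) else 0)"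
    by (intro sum.cong) (auto simp: P_0)
  also have "\<dots> = card (PR A n)" by simp
  finally show ?case using card_PR[OF assms] by simp
next
  case (Suc k)
  have "card (P A (Suc (Suc k)) n) = (\<Sum>l\<le>n. card (PR A l) * card (P A (Suc k) (n - l)))"
    by (rule card_P_Suc[OF assms])
  also have "\<dots> = (\<Sum>l\<le>n. card A ^ n * ((l + 1) * ((n - l + (2 * k + 1)) choose (n - l))))"
  proof (intro sum.cong HOL.refl)
    fix l assume l: "l \<in> {..n}"
    have e: "card A ^ l * card A ^ (n - l) = card A ^ n" using l by (simp add: power_add[symmetric])
    then show "card (PR A l) * card (P A (Suc k) (n - l)) = card A ^ n * ((l + 1) * ((n - l + (2 * k + 1)) choose (n - l)))"
      unfolding Suc.IH card_PR[OF assms] by (simp add: algebra_simps flip: e)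
  qed
  also have "\<dots> = card A ^ n * ((n + (2 * k + 1) + 2) choose n)"
    unfolding sum_distrib_left[symmetric] ident[of n "2 * k + 1"] by (rule HOL.refl)
  finally show ?case by (simp add: algebra_simps)
qed


lemma length_del: "j < length xs \<Longrightarrow> length (del j xs) = length xs - 1"
  by (simp add: del_def)

lemma set_del: "set (del j xs) \<subseteq> set xs"
  unfolding del_def using set_take_subset set_drop_subset by fastforce

lemma ord_sum_len_append [simp]: "ord_sum_len (xs @ ys) = ord_sum_len xs + ord_sum_len ys"
  by (simp add: ord_sum_len_def)

lemma ord_sum_len_tl: "ord_sum_len (drop 1 ys) \<le> ord_sum_len ys"
  by (cases ys) (auto simp: ord_sum_len_def)

lemma ord_sum_len_del: "ord_sum_len (del j xs) \<le> ord_sum_len xs"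
proof -
  have "ord_sum_len xs = ord_sum_len (take j xs) + ord_sum_len (drop j xs)"
    by (metis append_take_drop_id ord_sum_len_append)
  moreover have "drop (Suc j) xs = drop 1 (drop j xs)" by simp
  ultimately show ?thesis using ord_sum_len_tl[of "drop j xs"] by (simp add: del_def)
qed

lemma geom_lt: assumes "(m::nat) \<ge> 2" shows "(\<Sum>i\<le>n. m ^ i) < m ^ Suc n"
proof (induction n)
  case 0 then show ?case using assms by simp
next
  case (Suc n)
  have "2 * m ^ Suc n \<le> m * m ^ Suc n" using assms by (intro mult_le_mono1)
  then have "m ^ Suc n + m ^ Suc n \<le> m ^ Suc (Suc n)" by (simp only: mult_2 power_Suc[of m "Suc n"])
  then show ?case using Suc by simp
qed

lemma geom_le: assumes "(m::nat) \<ge> 2" shows "(\<Sum>i\<le>n. m ^ i) \<le> 2 * m ^ n"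
proof (cases n)
  case 0 then show ?thesis by simp
next
  case (Suc n')
  then show ?thesis using geom_lt[OF assms, of n'] by simp
qed

lemma geom_ge: "(m::nat) \<ge> 1 \<Longrightarrow> n + 1 \<le> (\<Sum>i\<le>n. m ^ i)"
proof -
  assume "m \<ge> 1"
  then have "(\<Sum>i\<le>n. (1::nat)) \<le> (\<Sum>i\<le>n. m ^ i)" by (intro sum_mono) simp
  then show ?thesis by simp
qed

lemma len1_distinct: "length xs = 1 \<Longrightarrow> distinct xs"
  by (cases xs) auto

lemma sum_bad:
  assumes finA: "finite A" and m2: "card A \<ge> 2" and k: "k > 0"
  shows "card {rs \<in> ord_presentations A k. ord_sum_len rs = n \<and> \<not> distinct rs} * (n + 1)
         \<le> 4 * k ^ 3 * card {rs \<in> ord_presentations A k. ord_sum_len rs = n}"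
proof (cases "k = 1")
  case True
  have e: "{rs \<in> ord_presentations A k. ord_sum_len rs = n \<and> \<not> distinct rs} = {}"
    using True len1_distinct by (auto simp: ord_presentations_def)
  show ?thesis unfolding e by simp
next
  case False
  define j where "j = k - 2"
  have kj: "k = Suc (Suc j)" using k False unfolding j_def by arith
  define m where "m = card A"
  define r where "r = 2 * j + 1"
  define Y where "Y = (\<Union>s\<in>{..n}. P A (Suc j) s)"
  have T: "{rs \<in> ord_presentations A k. ord_sum_len rs = n} = P A k n" by (simp add: P_def)
  have finY: "finite Y" using finA by (simp add: Y_def finite_P)
  have bad: "card {rs \<in> P A k n. \<not> distinct rs} \<le> k * k * card Y"
  proof (rule bad_bound[OF finY finite_P[OF finA]])
    fix rs assume "rs \<in> P A k n" then show "length rs = k" by (simp add: P_def ord_presentations_def)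
  next
    fix rs i j' assume rs: "rs \<in> P A k n" and ij: "i < j'" "j' < k" "rs ! i = rs ! j'"
    have l: "length rs = k" using rs by (simp add: P_def ord_presentations_def)
    have "ord_sum_len (del j' rs) \<le> n" using ord_sum_len_del[of j' rs] rs by (simp add: P_def)
    then show "del j' rs \<in> Y"
    proof -
      have "length (del j' rs) = Suc j" using length_del[of j' rs] ij l kj by simp
      moreover have "set (del j' rs) \<subseteq> lists A \<times> lists A"
        using set_del[of j' rs] rs by (auto simp: P_def ord_presentations_def)
      ultimately have "del j' rs \<in> P A (Suc j) (ord_sum_len (del j' rs))"
        by (simp add: P_def ord_presentations_def)
      then show ?thesis using \<open>ord_sum_len (del j' rs) \<le> n\<close> unfolding Y_def by blast
    qed
  qed
  have cY: "card Y \<le> 2 * m ^ n * ((n + r) choose r)"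
  proof -
    have "card Y \<le> (\<Sum>s\<le>n. card (P A (Suc j) s))" unfolding Y_def by (rule card_UN_le) simp
    also have "\<dots> \<le> (\<Sum>s\<le>n. m ^ s * ((n + r) choose r))"
    proof (rule sum_mono)
      fix s assume s: "s \<in> {..n}"
      have "card (P A (Suc j) s) = m ^ s * ((s + r) choose s)"
        using card_P[OF finA, of j s] by (simp add: m_def r_def)
      also have "(s + r) choose s = (s + r) choose r"
        using binomial_symmetric[of s "s + r"] by simp
      also have "\<dots> \<le> (n + r) choose r" using s by (intro binomial_right_mono) simp
      finally show "card (P A (Suc j) s) \<le> m ^ s * ((n + r) choose r)" by simp
    qed
    also have "\<dots> = (\<Sum>s\<le>n. m ^ s) * ((n + r) choose r)" by (simp add: sum_distrib_right)
    also have "\<dots> \<le> 2 * m ^ n * ((n + r) choose r)"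
      using geom_le[of m n] m2 by (simp add: m_def)
    finally show ?thesis .
  qed
  have cT: "card (P A k n) = m ^ n * ((n + r + 2) choose (r + 2))"
  proof -
    have "card (P A k n) = m ^ n * ((n + r + 2) choose n)"
      using card_P[OF finA, of "Suc j" n] kj by (simp add: m_def r_def)
    also have "(n + r + 2) choose n = (n + r + 2) choose (r + 2)"
      using binomial_symmetric[of n "n + r + 2"] by simp
    finally show ?thesis .
  qed
  have b1: "(n + 1) * ((n + r) choose r) \<le> (r + 1) * ((n + r + 1) choose (r + 1))"
    using Suc_times_binomial[of r "n + r"] by simp
  have b2: "(n + r + 1) choose (r + 1) \<le> (n + r + 2) choose (r + 2)"
    using binomial_Suc_Suc[of "n + r + 1" "r + 1"] by simp
  have bb: "(n + 1) * ((n + r) choose r) \<le> (r + 1) * ((n + r + 2) choose (r + 2))"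
    by (rule le_trans[OF b1 mult_le_mono2[OF b2]])
  have "card {rs \<in> P A k n. \<not> distinct rs} * (n + 1) \<le> k * k * card Y * (n + 1)"
    by (rule mult_le_mono1[OF bad])
  also have "\<dots> \<le> k * k * (2 * m ^ n * ((n + r) choose r)) * (n + 1)"
    by (rule mult_le_mono1[OF mult_le_mono2[OF cY]])
  also have "\<dots> = (2 * k * k * m ^ n) * ((n + 1) * ((n + r) choose r))" by (simp only: ac_simps)
  also have "\<dots> \<le> (2 * k * k * m ^ n) * ((r + 1) * ((n + r + 2) choose (r + 2)))"
    by (rule mult_le_mono2[OF bb])
  also have "\<dots> = 2 * k * k * (r + 1) * card (P A k n)" unfolding cT by (simp only: ac_simps)
  also have "\<dots> \<le> 4 * k ^ 3 * card (P A k n)"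
  proof -
    have "2 * k * k * (r + 1) \<le> 4 * k ^ 3" using kj by (simp add: r_def power3_eq_cube algebra_simps)
    then show ?thesis by (rule mult_le_mono1)
  qed
  finally have fin: "card {rs \<in> P A k n. \<not> distinct rs} * (n + 1) \<le> 4 * k ^ 3 * card (P A k n)" .
  have e: "{rs \<in> ord_presentations A k. ord_sum_len rs = n \<and> \<not> distinct rs} = {rs \<in> P A k n. \<not> distinct rs}"
    by (auto simp: P_def)
  show ?thesis unfolding e T by (rule fin)
qed


lemma ord_max_len_le_iff:
  assumes "rs \<noteq> []"
  shows "ord_max_len rs \<le> n \<longleftrightarrow> (\<forall>(u, v)\<in>set rs. length u \<le> n \<and> length v \<le> n)"
  using assms by (auto simp: ord_max_len_def Max_le_iff)

definition L :: "'a set \<Rightarrow> nat \<Rightarrow> nat \<Rightarrow> ('a list \<times> 'a list) list set" where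
  "L A k n = {rs. set rs \<subseteq> F A n \<and> length rs = k}"

lemma OP_le_iff:
  assumes "rs \<in> ord_presentations A k" "k > 0"
  shows "ord_max_len rs \<le> n \<longleftrightarrow> rs \<in> L A k n"
proof -
  have ne: "rs \<noteq> []" using assms by (auto simp: ord_presentations_def)
  show ?thesis using assms unfolding ord_max_len_le_iff[OF ne]
    by (auto simp: L_def F_def ord_presentations_def in_lists_conv_set subset_iff)
qed

lemma L_sub_OP: "L A k n \<subseteq> ord_presentations A k"
  by (auto simp: L_def F_def ord_presentations_def in_lists_conv_set subset_iff)

lemma finite_L: "finite A \<Longrightarrow> finite (L A k n)"
  unfolding L_def by (intro finite_lists_length_eq finite_F)

lemma card_L: "finite A \<Longrightarrow> card (L A k n) = ((\<Sum>i\<le>n. card A ^ i) ^ 2) ^ k"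
  unfolding L_def by (simp add: card_lists_length_eq finite_F card_F)

lemma max_T:
  assumes "k > 0"
  shows "{rs \<in> ord_presentations A k. ord_max_len rs = Suc n} = L A k (Suc n) - L A k n"
proof -
  have "rs \<in> ord_presentations A k \<and> ord_max_len rs = Suc n \<longleftrightarrow> rs \<in> L A k (Suc n) - L A k n" for rs
  proof (cases "rs \<in> ord_presentations A k")
    case True
    then show ?thesis using OP_le_iff[OF True assms, of n] OP_le_iff[OF True assms, of "Suc n"] by auto
  next
    case False then show ?thesis using L_sub_OP by blast
  qed
  then show ?thesis by blast
qed

lemma max_bad:
  assumes finA: "finite A" and m2: "card A \<ge> 2" and k: "k > 0"
  shows "card {rs \<in> ord_presentations A k. ord_max_len rs = Suc n \<and> \<not> distinct rs} * (Suc n + 1)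
         \<le> 4 * k ^ 3 * card {rs \<in> ord_presentations A k. ord_max_len rs = Suc n}"
proof -
  define m where "m = card A"
  define w where "w = (\<Sum>i\<le>Suc n. m ^ i)"
  define v where "v = (\<Sum>i\<le>n. m ^ i)"
  define T where "T = {rs \<in> ord_presentations A k. ord_max_len rs = Suc n}"
  define Y where "Y = L A (k - 1) (Suc n)"
  have TL: "T = L A k (Suc n) - L A k n" using max_T[OF k] by (simp add: T_def)
  have sub: "L A k n \<subseteq> L A k (Suc n)" by (auto simp: L_def F_def)
  have cT: "card T = (w ^ 2) ^ k - (v ^ 2) ^ k"
    unfolding TL using sub finite_L[OF finA] by (simp add: card_Diff_subset card_L[OF finA] w_def v_def m_def)
  have finT: "finite T" unfolding TL using finite_L[OF finA] by simp
  have bad: "card {rs \<in> T. \<not> distinct rs} \<le> k * k * card Y"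
  proof (rule bad_bound[OF _ finT])
    show "finite Y" unfolding Y_def by (rule finite_L[OF finA])
  next
    fix rs assume "rs \<in> T" then show "length rs = k" by (simp add: T_def ord_presentations_def)
  next
    fix rs i j assume rs: "rs \<in> T" and ij: "i < j" "j < k" "rs ! i = rs ! j"
    have "rs \<in> L A k (Suc n)" using rs TL by simp
    then show "del j rs \<in> Y" using set_del[of j rs] length_del[of j rs] ij
      by (auto simp: Y_def L_def)
  qed
  have cY: "card Y = (w ^ 2) ^ (k - 1)" unfolding Y_def by (simp add: card_L[OF finA] w_def m_def)
  have wv: "w = v + m ^ Suc n" by (simp add: w_def v_def)
  have vlt: "v < m ^ Suc n" using geom_lt[of m n] m2 by (simp add: v_def m_def)
  have w2v: "2 * v \<le> w" using wv vlt by simp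
  have "2 * (v ^ 2) ^ k \<le> 2 ^ (2 * k) * (v ^ 2) ^ k"
  proof (rule mult_le_mono1)
    have "(2::nat) ^ 1 \<le> 2 ^ (2 * k)" using k by (intro power_increasing) auto
    then show "2 \<le> (2::nat) ^ (2 * k)" by simp
  qed
  also have "\<dots> = (2 * v) ^ (2 * k)" by (simp add: power_mult_distrib power_mult)
  also have "\<dots> \<le> w ^ (2 * k)" using w2v by (rule power_mono) simp
  also have "\<dots> = (w ^ 2) ^ k" by (simp add: power_mult)
  finally have vw: "2 * (v ^ 2) ^ k \<le> (w ^ 2) ^ k" .
  have TT: "(w ^ 2) ^ k \<le> 2 * card T" using vw unfolding cT by simp
  have nw: "Suc n + 1 \<le> w ^ 2"
  proof -
    have "Suc n + 1 \<le> w" using geom_ge[of m "Suc n"] m2 by (simp add: w_def m_def)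
    also have "w \<le> w ^ 2" by (simp add: power2_eq_square)
    finally show ?thesis .
  qed
  have "card {rs \<in> T. \<not> distinct rs} * (Suc n + 1) \<le> k * k * card Y * (Suc n + 1)"
    by (rule mult_le_mono1[OF bad])
  also have "\<dots> \<le> k * k * (w ^ 2) ^ (k - 1) * w ^ 2"
    unfolding cY by (rule mult_le_mono2[OF nw])
  also have "\<dots> = k * k * (w ^ 2) ^ k"
  proof -
    have "(w ^ 2) ^ (k - 1) * w ^ 2 = (w ^ 2) ^ k" using k
      by (metis Suc_diff_1 power_Suc2)
    then show ?thesis by (simp only: mult.assoc)
  qed
  also have "\<dots> \<le> k * k * (2 * card T)" by (rule mult_le_mono2[OF TT])
  also have "\<dots> \<le> 4 * k ^ 3 * card T"
  proof -
    have "k * k * 2 \<le> 4 * k ^ 3" using k by (simp add: power3_eq_cube)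
    then have "k * k * 2 * card T \<le> 4 * k ^ 3 * card T" by (rule mult_le_mono1)
    then show ?thesis by (simp add: ac_simps)
  qed
  finally have fin: "card {rs \<in> T. \<not> distinct rs} * (Suc n + 1) \<le> 4 * k ^ 3 * card T" .
  have e: "{rs \<in> ord_presentations A k. ord_max_len rs = Suc n \<and> \<not> distinct rs} = {rs \<in> T. \<not> distinct rs}"
    by (auto simp: T_def)
  show ?thesis unfolding e using fin by (simp add: T_def)
qed


lemma conv_lemma:
  fixes x :: "nat \<Rightarrow> real" and b t :: "nat \<Rightarrow> nat" and c :: nat
  assumes x: "\<And>n. n \<ge> 1 \<Longrightarrow> \<bar>x n\<bar> \<le> 2 * real (b n) / real (t n)"
    and bt: "\<And>n. n \<ge> 1 \<Longrightarrow> b n * (n + 1) \<le> c * t n"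
  shows "x \<longlonglongrightarrow> 0"
proof -
  have bnd: "\<bar>x n\<bar> \<le> 2 * real c * inverse (real (Suc n))" if n: "n \<ge> 1" for n
  proof -
    have "2 * real (b n) / real (t n) \<le> 2 * real c * inverse (real (Suc n))"
    proof (cases "t n = 0")
      case True then show ?thesis by simp
    next
      case False
      have "real (b n) * real (Suc n) \<le> real c * real (t n)"
        using bt[OF n] by (metis Suc_eq_plus1 of_nat_mono of_nat_mult)
      then have "real (b n) / real (t n) \<le> real c / real (Suc n)"
        using False by (simp add: divide_simps)
      then show ?thesis by (simp add: divide_inverse)
    qed
    then show ?thesis using x[OF n] by linarith
  qed
  have lim: "(\<lambda>n. 2 * real c * inverse (real (Suc n))) \<longlonglongrightarrow> 0"
    using tendsto_mult_right_zero[OF LIMSEQ_inverse_real_of_nat, of "2 * real c"] by simp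
  have lim2: "(\<lambda>n. - (2 * real c * inverse (real (Suc n)))) \<longlonglongrightarrow> 0"
    using tendsto_minus[OF lim] by simp
  have ev: "eventually (\<lambda>n. n \<ge> (1::nat)) sequentially" by (rule eventually_ge_at_top)
  show ?thesis
  proof (rule tendsto_sandwich[OF _ _ lim2 lim])
    show "\<forall>\<^sub>F n in sequentially. - (2 * real c * inverse (real (Suc n))) \<le> x n"
      using ev by eventually_elim (use bnd in fastforce)
    show "\<forall>\<^sub>F n in sequentially. x n \<le> 2 * real c * inverse (real (Suc n))"
      using ev by eventually_elim (use bnd in fastforce)
  qed
qed

theorem theorem7:
  fixes C :: "'a list set monoid \<Rightarrow> bool" and A :: "'a set" and k :: nat
  assumes "iso_closed_class C"
    and "finite A" and "card A \<ge> 2"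
    and "k > 0"
  shows "(\<lambda>n. ord_proportion C A k ord_sum_len n - proportion C A k sum_len n) \<longlonglongrightarrow> 0 \<and>
         (\<lambda>n. ord_proportion C A k ord_max_len n - proportion C A k max_len n) \<longlonglongrightarrow> 0"
proof
  show "(\<lambda>n. ord_proportion C A k ord_sum_len n - proportion C A k sum_len n) \<longlonglongrightarrow> 0"
  proof (rule conv_lemma)
    fix n :: nat
    show "\<bar>ord_proportion C A k ord_sum_len n - proportion C A k sum_len n\<bar> \<le>
      2 * real (card {rs \<in> ord_presentations A k. ord_sum_len rs = n \<and> \<not> distinct rs})
      / real (card {rs \<in> ord_presentations A k. ord_sum_len rs = n})"
    proof (rule prop_diff_bound)
      show "finite {rs \<in> ord_presentations A k. ord_sum_len rs = n}"
        using finite_P[OF assms(2), of k n] by (simp add: P_def)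
    next
      fix rs :: "('a list \<times> 'a list) list" assume "distinct rs"
      then show "sum_len (set rs) = ord_sum_len rs"
        by (simp add: sum_len_def ord_sum_len_def sum_list_distinct_conv_sum_set)
    qed
    show "card {rs \<in> ord_presentations A k. ord_sum_len rs = n \<and> \<not> distinct rs} * (n + 1)
         \<le> 4 * k ^ 3 * card {rs \<in> ord_presentations A k. ord_sum_len rs = n}"
      by (rule sum_bad[OF assms(2-4)])
  qed
next
  show "(\<lambda>n. ord_proportion C A k ord_max_len n - proportion C A k max_len n) \<longlonglongrightarrow> 0"
  proof (rule conv_lemma)
    fix n :: nat
    show "\<bar>ord_proportion C A k ord_max_len n - proportion C A k max_len n\<bar> \<le>
      2 * real (card {rs \<in> ord_presentations A k. ord_max_len rs = n \<and> \<not> distinct rs})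
      / real (card {rs \<in> ord_presentations A k. ord_max_len rs = n})"
    proof (rule prop_diff_bound)
      show "finite {rs \<in> ord_presentations A k. ord_max_len rs = n}"
      proof (rule finite_subset[OF _ finite_L[OF assms(2), of k n]])
        show "{rs \<in> ord_presentations A k. ord_max_len rs = n} \<subseteq> L A k n"
          using OP_le_iff[OF _ assms(4)] by blast
      qed
    next
      fix rs :: "('a list \<times> 'a list) list"
      show "max_len (set rs) = ord_max_len rs"
        by (simp add: max_len_def ord_max_len_def)
    qed
  next
    fix n :: nat assume "n \<ge> 1"
    then obtain n' where n: "n = Suc n'" by (cases n) auto
    show "card {rs \<in> ord_presentations A k. ord_max_len rs = n \<and> \<not> distinct rs} * (n + 1)
         \<le> 4 * k ^ 3 * card {rs \<in> ord_presentations A k. ord_max_len rs = n}"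
      unfolding n by (rule max_bad[OF assms(2-4)])
  qed
qed

end
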